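(* Let $\Gamma\to\operatorname{U}(V)$ be a unitary representation of a finite group $\Gamma$ on a finite-dimensional hermitean vector space $V$. Then any $X\in\operatorname{Der}(\mathcal C^\infty(V))$ such that $X|_{\mathcal C^\infty(V)^\Gamma}=0$ vanishes.
   Context: $\mathcal C^\infty(V)$ is the algebra of smooth real-valued functions on $V$ viewed as a real vector space, $\mathcal C^\infty(V)^\Gamma$ its subalgebra of $\Gamma$-invariant functions, and $\operatorname{Der}(\mathcal C^\infty(V))$ the module of $\mathbb R$-linear derivations (smooth vector fields). *)

theory Defs
  imports "HOL-Analysis.Analysis" "HOL-Algebra.Group"
begin

text \<open>Standard hermitean inner product on complex^'n (linear in the first argument).\<close>
definition herm_inner :: "complex^'n \<Rightarrow> complex^'n \<Rightarrow> complex" where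
  "herm_inner x y = (\<Sum>i\<in>UNIV. x $ i * cnj (y $ i))"

text \<open>Unitary operators: complex-linear bijections preserving the hermitean product.\<close>
definition unitary_map :: "(complex^'n \<Rightarrow> complex^'n) \<Rightarrow> bool" where
  "unitary_map U \<longleftrightarrow> Vector_Spaces.linear (*s) (*s) U \<and> bij U \<and>
     (\<forall>x y. herm_inner (U x) (U y) = herm_inner x y)"

text \<open>C^k real-valued functions on a real normed vector space (finite-dimensional in use).\<close>
fun Ck :: "nat \<Rightarrow> ('a::real_normed_vector \<Rightarrow> real) \<Rightarrow> bool" where
  "Ck 0 f = continuous_on UNIV f"
| "Ck (Suc k) f = ((\<forall>x. f differentiable (at x)) \<and>
                    (\<forall>v. Ck k (\<lambda>x. frechet_derivative f (at x) v)))"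

definition smooth :: "('a::real_normed_vector \<Rightarrow> real) \<Rightarrow> bool" where
  "smooth f \<longleftrightarrow> (\<forall>k. Ck k f)"

text \<open>R-linear derivations of the algebra C^\<infinity>(V) (values off C^\<infinity>(V) are irrelevant).\<close>
definition smooth_derivation :: "(('a::real_normed_vector \<Rightarrow> real) \<Rightarrow> ('a \<Rightarrow> real)) \<Rightarrow> bool" where
  "smooth_derivation X \<longleftrightarrow>
     (\<forall>f. smooth f \<longrightarrow> smooth (X f)) \<and>
     (\<forall>f g. smooth f \<longrightarrow> smooth g \<longrightarrow> X (\<lambda>x. f x + g x) = (\<lambda>x. X f x + X g x)) \<and>
     (\<forall>c f. smooth f \<longrightarrow> X (\<lambda>x. c * f x) = (\<lambda>x. c * X f x)) \<and>
     (\<forall>f g. smooth f \<longrightarrow> smooth g \<longrightarrow> X (\<lambda>x. f x * g x) = (\<lambda>x. f x * X g x + X f x * g x))"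

end

theory Submission
  imports Defs "HOL-Computational_Algebra.Polynomial"
begin

lemma Ck_const: "Ck k (\<lambda>x::'a::real_normed_vector. c)"
proof (induction k arbitrary: c)
  case 0 then show ?case by simp
next
  case (Suc k)
  have "frechet_derivative (\<lambda>x::'a. c) (at x) = (\<lambda>v. 0)" for x
    by (metis frechet_derivative_at has_derivative_const)
  then show ?case using Suc by simp
qed

lemma Ck_Suc_imp: "Ck (Suc k) f \<Longrightarrow> Ck k f"
proof (induction k arbitrary: f)
  case 0
  then show ?case
    by (auto intro!: continuous_at_imp_continuous_on differentiable_imp_continuous_within)
next
  case (Suc k)
  then show ?case by simp
qed

lemma Ck_add: "Ck k f \<Longrightarrow> Ck k g \<Longrightarrow> Ck k (\<lambda>x. f x + g x)"
proof (induction k arbitrary: f g)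
  case 0 then show ?case by (simp add: continuous_on_add)
next
  case (Suc k)
  have d: "frechet_derivative (\<lambda>x. f x + g x) (at x) = (\<lambda>v. frechet_derivative f (at x) v + frechet_derivative g (at x) v)" for x
  proof -
    have "(f has_derivative frechet_derivative f (at x)) (at x)" "(g has_derivative frechet_derivative g (at x)) (at x)"
      using Suc.prems by (auto simp: frechet_derivative_works)
    then have "((\<lambda>x. f x + g x) has_derivative (\<lambda>v. frechet_derivative f (at x) v + frechet_derivative g (at x) v)) (at x)"
      by (rule has_derivative_add)
    then show ?thesis by (rule frechet_derivative_at[symmetric])
  qed
  show ?case using Suc by (simp add: d)
qed

lemma Ck_mult: "Ck k f \<Longrightarrow> Ck k g \<Longrightarrow> Ck k (\<lambda>x. f x * g x)"
proof (induction k arbitrary: f g)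
  case 0 then show ?case by (simp add: continuous_on_mult)
next
  case (Suc k)
  have d: "frechet_derivative (\<lambda>x. f x * g x) (at x) = (\<lambda>v. f x * frechet_derivative g (at x) v + frechet_derivative f (at x) v * g x)" for x
  proof -
    have "(f has_derivative frechet_derivative f (at x)) (at x)" "(g has_derivative frechet_derivative g (at x)) (at x)"
      using Suc.prems by (auto simp: frechet_derivative_works)
    then have "((\<lambda>x. f x * g x) has_derivative (\<lambda>v. f x * frechet_derivative g (at x) v + frechet_derivative f (at x) v * g x)) (at x)"
      by (rule has_derivative_mult)
    then show ?thesis by (rule frechet_derivative_at[symmetric])
  qed
  have fk: "Ck k f" "Ck k g" using Suc.prems Ck_Suc_imp by blast+
  have "Ck k (\<lambda>x. f x * frechet_derivative g (at x) v + frechet_derivative f (at x) v * g x)" for v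
    using Suc fk by (intro Ck_add) auto
  then show ?case using Suc by (simp add: d)
qed

lemma Ck_linear: "bounded_linear l \<Longrightarrow> Ck k l"
proof (cases k)
  case 0
  assume "bounded_linear l" then show ?thesis using 0 by (simp add: linear_continuous_on)
next
  case (Suc m)
  assume l: "bounded_linear l"
  have "frechet_derivative l (at x) = l" for x
    using bounded_linear_imp_has_derivative[OF l] by (rule frechet_derivative_at[symmetric])
  then show ?thesis using Suc l Ck_const by (auto simp: bounded_linear_imp_differentiable)
qed

lemma Ck_comp_linear: "bounded_linear L \<Longrightarrow> Ck k f \<Longrightarrow> Ck k (\<lambda>x. f (L x))"
proof (induction k arbitrary: f)
  case 0 then show ?case
    by (simp add: continuous_on_compose2[OF _ linear_continuous_on])
next
  case (Suc k)
  have d: "frechet_derivative (\<lambda>x. f (L x)) (at x) = (\<lambda>v. frechet_derivative f (at (L x)) (L v))" for x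
  proof -
    have "(f has_derivative frechet_derivative f (at (L x))) (at (L x))" using Suc.prems by (auto simp: frechet_derivative_works)
    then have "((\<lambda>x. f (L x)) has_derivative (\<lambda>v. frechet_derivative f (at (L x)) (L v))) (at x)"
      using diff_chain_at[OF bounded_linear_imp_has_derivative[OF Suc.prems(1)]] unfolding o_def by blast
    then show ?thesis by (rule frechet_derivative_at[symmetric])
  qed
  have "(\<lambda>x. f (L x)) differentiable (at x)" for x
    using differentiable_chain_at[OF bounded_linear_imp_differentiable[OF Suc.prems(1)], of f x] Suc.prems
    by (simp add: o_def)
  moreover have "Ck k (\<lambda>x. frechet_derivative f (at (L x)) (L v))" for v
    using Suc.IH[of "\<lambda>y. frechet_derivative f (at y) (L v)"] Suc.prems by auto
  ultimately show ?case by (simp add: d)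
qed


lemma smooth_const: "smooth (\<lambda>x. c)" by (simp add: smooth_def Ck_const)
lemma smooth_add: "smooth f \<Longrightarrow> smooth g \<Longrightarrow> smooth (\<lambda>x. f x + g x)" by (simp add: smooth_def Ck_add)
lemma smooth_mult: "smooth f \<Longrightarrow> smooth g \<Longrightarrow> smooth (\<lambda>x. f x * g x)" by (simp add: smooth_def Ck_mult)
lemma smooth_linear: "bounded_linear l \<Longrightarrow> smooth l" by (simp add: smooth_def Ck_linear)
lemma smooth_comp_linear: "bounded_linear L \<Longrightarrow> smooth f \<Longrightarrow> smooth (\<lambda>x. f (L x))"
  by (simp add: smooth_def Ck_comp_linear)
lemma smooth_power: "smooth f \<Longrightarrow> smooth (\<lambda>x. f x ^ k)"
  by (induction k) (auto intro: smooth_mult smooth_const)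
lemma smooth_sum: "finite K \<Longrightarrow> (\<And>k. k \<in> K \<Longrightarrow> smooth (h k)) \<Longrightarrow> smooth (\<lambda>x. \<Sum>k\<in>K. h k x)"
  by (induction K rule: finite_induct) (auto intro: smooth_add smooth_const)
lemma smooth_continuous: "smooth f \<Longrightarrow> continuous_on UNIV f"
  by (metis smooth_def Ck.simps(1))

lemma smooth_coeff:
  assumes "finite A" "\<And>s. s \<in> A \<Longrightarrow> smooth (a s)"
  shows "smooth (\<lambda>y. coeff (\<Prod>s\<in>A. [:- a s y, 1:]) k)"
  using assms
proof (induction A arbitrary: k rule: finite_induct)
  case empty
  then show ?case by (simp add: smooth_const)
next
  case (insert s A)
  have e: "coeff (\<Prod>s\<in>insert s A. [:- a s y, 1:]) k =
     - a s y * coeff (\<Prod>s\<in>A. [:- a s y, 1:]) k + (if k = 0 then 0 else coeff (\<Prod>s\<in>A. [:- a s y, 1:]) (k - 1))" for y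
    using insert by (simp add: coeff_pCons')
  have sm: "smooth (\<lambda>y. - a s y)"
    using smooth_mult[OF smooth_const[of "-1"] insert.prems[of s]] by simp
  have sm2: "smooth (\<lambda>y. if k = 0 then 0 else coeff (\<Prod>s\<in>A. [:- a s y, 1:]) (k - 1))"
    by (cases "k = 0") (simp_all add: smooth_const insert)
  show ?case unfolding e
    by (intro smooth_add smooth_mult sm sm2) (auto simp: insert smooth_const)
qed

context
  fixes X :: "('a::real_normed_vector \<Rightarrow> real) \<Rightarrow> ('a \<Rightarrow> real)"
  assumes X: "smooth_derivation X"
begin

lemma X_add: "smooth f \<Longrightarrow> smooth g \<Longrightarrow> X (\<lambda>x. f x + g x) = (\<lambda>x. X f x + X g x)"
  using X by (simp add: smooth_derivation_def)
lemma X_scale: "smooth f \<Longrightarrow> X (\<lambda>x. c * f x) = (\<lambda>x. c * X f x)"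
  using X by (simp add: smooth_derivation_def)
lemma X_mult: "smooth f \<Longrightarrow> smooth g \<Longrightarrow> X (\<lambda>x. f x * g x) = (\<lambda>x. f x * X g x + X f x * g x)"
  using X by (simp add: smooth_derivation_def)
lemma X_smooth: "smooth f \<Longrightarrow> smooth (X f)"
  using X by (simp add: smooth_derivation_def)

lemma X_zero: "X (\<lambda>x. 0) = (\<lambda>x. 0)"
  using X_scale[OF smooth_const[of 0], of 0] by simp

lemma X_one: "X (\<lambda>x. 1) = (\<lambda>x. 0)"
proof -
  have "X (\<lambda>x. 1) = (\<lambda>x. 1 * X (\<lambda>x. 1) x + X (\<lambda>x. 1) x * 1)"
    using X_mult[OF smooth_const[of 1] smooth_const[of 1]] by simp
  then have "\<And>x. X (\<lambda>x. 1) x = 2 * X (\<lambda>x. 1) x" by (metis mult_2 mult_1 mult_1_right)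
  then show ?thesis by (auto simp: fun_eq_iff)
qed

lemma X_sum: "finite K \<Longrightarrow> (\<And>k. k \<in> K \<Longrightarrow> smooth (h k)) \<Longrightarrow> X (\<lambda>x. \<Sum>k\<in>K. h k x) = (\<lambda>x. \<Sum>k\<in>K. X (h k) x)"
proof (induction K rule: finite_induct)
  case empty then show ?case by (simp add: X_zero)
next
  case (insert k K)
  then show ?case
    by (simp add: X_add smooth_sum)
qed

lemma X_power: "smooth f \<Longrightarrow> X (\<lambda>x. f x ^ k) = (\<lambda>x. of_nat k * f x ^ (k - 1) * X f x)"
proof (induction k)
  case 0 then show ?case by (simp add: X_one)
next
  case (Suc k)
  have "X (\<lambda>x. f x ^ Suc k) = X (\<lambda>x. f x * f x ^ k)" by simp
  also have "\<dots> = (\<lambda>x. f x * X (\<lambda>x. f x ^ k) x + X f x * f x ^ k)"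
    using Suc by (simp add: X_mult smooth_power)
  also have "\<dots> = (\<lambda>x. of_nat (Suc k) * f x ^ (Suc k - 1) * X f x)"
    using Suc by (cases k) (auto simp: fun_eq_iff algebra_simps)
  finally show ?case .
qed

end


lemma poly_sum_le:
  fixes p :: "real poly"
  assumes "degree p \<le> N"
  shows "poly p t = (\<Sum>k\<le>N. coeff p k * t ^ k)"
proof -
  have "poly p t = (\<Sum>k\<le>degree p. coeff p k * t ^ k)" by (rule poly_altdef)
  also have "\<dots> = (\<Sum>k\<le>N. coeff p k * t ^ k)"
    by (rule sum.mono_neutral_left) (use assms in \<open>auto simp: coeff_eq_0\<close>)
  finally show ?thesis .
qed

lemma core:
  fixes X :: "('a::real_normed_vector \<Rightarrow> real) \<Rightarrow> ('a \<Rightarrow> real)"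
    and S :: "('a \<Rightarrow> 'a) set"
  assumes X: "smooth_derivation X"
    and fin: "finite S" and idS: "id \<in> S"
    and lin: "\<forall>s\<in>S. bounded_linear s"
    and bij: "\<forall>t\<in>S. bij_betw (\<lambda>s. s \<circ> t) S S"
    and H: "\<forall>f. smooth f \<and> (\<forall>s\<in>S. \<forall>v. f (s v) = f v) \<longrightarrow> X f = (\<lambda>x. 0)"
    and F: "smooth F"
    and sep: "\<forall>s\<in>S. s \<noteq> id \<longrightarrow> F (s x) \<noteq> F x"
  shows "X F x = 0"
proof -
  define P where "P y = (\<Prod>s\<in>S. [:- F (s y), 1:])" for y
  define c where "c k y = coeff (P y) k" for k y
  define N where "N = card S"
  have deg: "degree (P y) \<le> N" for y
  proof -
    have "degree (P y) \<le> sum (degree \<circ> (\<lambda>s. [:- F (s y), 1:])) S"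
      unfolding P_def by (rule degree_prod_sum_le[OF fin])
    also have "\<dots> = N" by (simp add: N_def)
    finally show ?thesis .
  qed
  have csm: "smooth (c k)" for k
    unfolding c_def P_def
    by (rule smooth_coeff[OF fin]) (use lin F smooth_comp_linear in blast)
  have cinv: "c k (t v) = c k v" if "t \<in> S" for k t v
  proof -
    have "P (t v) = (\<Prod>s\<in>S. (\<lambda>r. [:- F (r v), 1:]) (s \<circ> t))" unfolding P_def by simp
    also have "\<dots> = P v" unfolding P_def
      by (rule prod.reindex_bij_betw) (use bij that in blast)
    finally show ?thesis by (simp add: c_def)
  qed
  have Xc: "X (c k) = (\<lambda>x. 0)" for k
    using H csm cinv by blast
  have zero: "(\<Sum>k\<le>N. c k y * F y ^ k) = 0" for y
  proof -
    have "poly (P y) (F y) = 0"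
      unfolding P_def poly_prod using fin idS by (auto intro!: bexI[of _ id])
    then show ?thesis using poly_sum_le[OF deg] by (simp add: c_def)
  qed
  have smk: "smooth (\<lambda>y. c k y * F y ^ k)" for k
    by (intro smooth_mult csm smooth_power F)
  have "(\<lambda>y. 0) = X (\<lambda>y. \<Sum>k\<le>N. c k y * F y ^ k)"
    using zero X_zero[OF X] by simp
  also have "\<dots> = (\<lambda>y. \<Sum>k\<le>N. X (\<lambda>y. c k y * F y ^ k) y)"
    by (rule X_sum[OF X]) (auto simp: smk)
  also have "\<dots> = (\<lambda>y. \<Sum>k\<le>N. c k y * (of_nat k * F y ^ (k - 1) * X F y))"
    by (simp add: X_mult[OF X] csm smooth_power F X_power[OF X] Xc)
  finally have e1: "(\<Sum>k\<le>N. c k x * (of_nat k * F x ^ (k - 1))) * X F x = 0"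
    by (simp add: fun_eq_iff sum_distrib_right mult.assoc)
  have "DERIV (\<lambda>t. \<Sum>k\<le>N. c k x * t ^ k) (F x) :> (\<Sum>k\<le>N. c k x * (of_nat k * F x ^ (k - 1)))"
    by (auto intro!: derivative_eq_intros sum.cong simp: mult_ac)
  moreover have "(\<lambda>t. \<Sum>k\<le>N. c k x * t ^ k) = (\<lambda>t. poly (P x) t)"
    using poly_sum_le[OF deg] by (simp add: c_def fun_eq_iff)
  ultimately have e2: "(\<Sum>k\<le>N. c k x * (of_nat k * F x ^ (k - 1))) = poly (pderiv (P x)) (F x)"
    using poly_DERIV DERIV_unique by metis
  define R where "R = (\<Prod>s\<in>S - {id}. [:- F (s x), 1:])"
  have PR: "P x = [:- F x, 1:] * R"
    unfolding P_def R_def using prod.remove[OF fin idS, of "\<lambda>s. [:- F (s x), 1:]"] by simp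
  have "poly (pderiv (P x)) (F x) = poly R (F x)"
    unfolding PR pderiv_mult by (simp add: pderiv_pCons)
  also have "\<dots> = (\<Prod>s\<in>S - {id}. F x - F (s x))"
    unfolding R_def poly_prod by simp
  also have "\<dots> \<noteq> 0"
    using fin sep by (auto simp: prod_zero_iff)
  finally show ?thesis using e1 e2 by simp
qed


lemma kernel_interior_empty:
  fixes s :: "'a::euclidean_space \<Rightarrow> 'a"
  assumes "linear s" "s \<noteq> id"
  shows "interior {x. s x = x} = {}"
proof -
  have sub: "subspace {x. s x = x}"
    unfolding subspace_def using assms(1) by (auto simp: linear_add linear_scale linear_0)
  have "dim {x. s x = x} < DIM('a)"
  proof (rule ccontr)
    assume "\<not> ?thesis"
    then have "dim {x. s x = x} = DIM('a)" using dim_subset_UNIV[of "{x. s x = x}"] by linarith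
    then have "span {x. s x = x} = UNIV" by (simp add: dim_eq_full)
    then have "{x. s x = x} = UNIV" using sub span_eq_iff by metis
    then show False using assms(2) by (auto simp: fun_eq_iff)
  qed
  then show ?thesis by (rule empty_interior_lowdim)
qed

lemma finite_union_interior_empty:
  fixes T :: "'b set" and K :: "'b \<Rightarrow> 'a::euclidean_space set"
  assumes "finite T" "\<And>t. t \<in> T \<Longrightarrow> closed (K t)" "\<And>t. t \<in> T \<Longrightarrow> interior (K t) = {}"
  shows "interior (\<Union>t\<in>T. K t) = {}"
  using assms
proof (induction T rule: finite_induct)
  case empty then show ?case by simp
next
  case (insert t T)
  have c: "closed (\<Union>t\<in>T. K t)" using insert by (auto intro!: closed_UN)
  have "interior (\<Union>t\<in>insert t T. K t) = interior ((\<Union>t\<in>T. K t) \<union> K t)"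
    by (simp add: Un_commute)
  also have "\<dots> = interior (\<Union>t\<in>T. K t)"
    by (rule interior_closed_Un_empty_interior[OF c]) (simp add: insert)
  finally show ?case using insert by simp
qed

lemma core2:
  fixes X :: "('a::euclidean_space \<Rightarrow> real) \<Rightarrow> ('a \<Rightarrow> real)"
    and S :: "('a \<Rightarrow> 'a) set"
  assumes X: "smooth_derivation X"
    and fin: "finite S" and idS: "id \<in> S"
    and lin: "\<forall>s\<in>S. bounded_linear s"
    and bij: "\<forall>t\<in>S. bij_betw (\<lambda>s. s \<circ> t) S S"
    and H: "\<forall>f. smooth f \<and> (\<forall>s\<in>S. \<forall>v. f (s v) = f v) \<longrightarrow> X f = (\<lambda>x. 0)"
  shows "\<forall>f. smooth f \<longrightarrow> X f = (\<lambda>x. 0)"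
proof (intro allI impI)
  fix f :: "'a \<Rightarrow> real"
  assume f: "smooth f"
  define D where "D = {x. \<forall>s\<in>S. s \<noteq> id \<longrightarrow> s x \<noteq> x}"
  have onD: "X f x = 0" if "x \<in> D" for x
  proof -
    define h where "h y = (\<Sum>b\<in>Basis. ((y - x) \<bullet> b) ^ 2)" for y
    have hsm: "smooth h"
    proof -
      have "smooth (\<lambda>y. (y - x) \<bullet> b)" for b :: 'a
      proof -
        have "(\<lambda>y. (y - x) \<bullet> b) = (\<lambda>y. y \<bullet> b + (- (x \<bullet> b)))" by (simp add: fun_eq_iff inner_diff_left)
        then show ?thesis
          by (simp only:) (rule smooth_add[OF smooth_linear[OF bounded_linear_inner_left] smooth_const])
      qed
      then show ?thesis unfolding h_def by (intro smooth_sum smooth_power) auto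
    qed
    have h0: "h x = 0" by (simp add: h_def)
    have hne: "h y \<noteq> 0" if "y \<noteq> x" for y
    proof
      assume "h y = 0"
      then have "\<forall>b\<in>Basis. ((y - x) \<bullet> b) ^ 2 = 0"
        unfolding h_def by (subst (asm) sum_nonneg_eq_0_iff) auto
      then have "\<forall>b\<in>Basis. (y - x) \<bullet> b = 0" by simp
      then have "y - x = 0" using euclidean_all_zero_iff by blast
      then show False using that by simp
    qed
    have sepx: "\<forall>s\<in>S. s \<noteq> id \<longrightarrow> s x \<noteq> x" using that by (simp add: D_def)
    have Xh: "X h x = 0"
      by (rule core[OF X fin idS lin bij H hsm]) (use sepx hne h0 in metis)
    have "finite ((\<lambda>s. (f x - f (s x)) / h (s x)) ` (S - {id}))" using fin by simp
    then obtain t :: real where t: "t \<notin> (\<lambda>s. (f x - f (s x)) / h (s x)) ` (S - {id})"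
      using ex_new_if_finite[OF infinite_UNIV_char_0] by blast
    define F where "F y = f y + t * h y" for y
    have Fsm: "smooth F" unfolding F_def by (intro smooth_add smooth_mult smooth_const f hsm)
    have sepF: "\<forall>s\<in>S. s \<noteq> id \<longrightarrow> F (s x) \<noteq> F x"
    proof (intro ballI impI notI)
      fix s assume s: "s \<in> S" "s \<noteq> id" and e: "F (s x) = F x"
      have hs: "h (s x) \<noteq> 0" using hne sepx s by blast
      from e have "f (s x) + t * h (s x) = f x" by (simp add: F_def h0)
      then have "t = (f x - f (s x)) / h (s x)" using hs by (simp add: field_simps)
      then show False using t s by blast
    qed
    have "X F x = 0" by (rule core[OF X fin idS lin bij H Fsm sepF])
    moreover have "X F = (\<lambda>y. X f y + t * X h y)"
      unfolding F_def by (simp add: X_add[OF X] X_scale[OF X] f hsm smooth_mult smooth_const)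
    ultimately show ?thesis using Xh by simp
  qed
  have "D = - (\<Union>s\<in>S - {id}. {x. s x = x})" by (auto simp: D_def)
  moreover have "interior (\<Union>s\<in>S - {id}. {x. s x = x}) = {}"
  proof (rule finite_union_interior_empty)
    show "finite (S - {id})" using fin by simp
    fix s assume s: "s \<in> S - {id}"
    then have bl: "bounded_linear s" using lin by blast
    show "closed {x. s x = x}"
      by (rule closed_Collect_eq) (auto intro: linear_continuous_on bl continuous_on_id)
    show "interior {x. s x = x} = {}"
      using kernel_interior_empty[of s] bl s bounded_linear.linear by blast
  qed
  ultimately have cD: "closure D = UNIV" by (simp only: closure_complement) simp
  have "closed {x. X f x = 0}"
    using smooth_continuous[OF X_smooth[OF X f]] by (intro closed_Collect_eq) auto
  then have "closure D \<subseteq> {x. X f x = 0}" using onD by (intro closure_minimal) auto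
  then show "X f = (\<lambda>x. 0)" using cD by auto
qed


lemma unitary_bounded_linear:
  fixes U :: "complex^'n \<Rightarrow> complex^'n"
  assumes "unitary_map U"
  shows "bounded_linear U"
proof -
  have l: "Vector_Spaces.linear (*s) (*s) U" using assms by (simp add: unitary_map_def)
  then have add: "U (a + b) = U a + U b" and sc: "U (c *s a) = c *s U a" for a b c
    by (auto simp: Vector_Spaces.linear_def module_hom_def module_hom_axioms_def)
  have rs: "r *\<^sub>R a = complex_of_real r *s a" for r and a :: "complex^'n"
    by (simp add: vec_eq_iff) (simp add: scaleR_conv_of_real)
  have "U (r *\<^sub>R a) = r *\<^sub>R U a" for r a
    by (simp add: rs sc)
  then have "linear U" using add by (simp add: linear_iff)
  then show ?thesis by (simp add: linear_conv_bounded_linear)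
qed

theorem mainTheorem10:
  fixes G :: "('g, 'b) monoid_scheme"
    and \<rho> :: "'g \<Rightarrow> complex^'n \<Rightarrow> complex^'n"
    and X :: "(complex^'n \<Rightarrow> real) \<Rightarrow> (complex^'n \<Rightarrow> real)"
  assumes "group G"
    and "finite (carrier G)"
    and "\<forall>g\<in>carrier G. unitary_map (\<rho> g)"
    and "\<forall>g\<in>carrier G. \<forall>h\<in>carrier G. \<rho> (g \<otimes>\<^bsub>G\<^esub> h) = \<rho> g \<circ> \<rho> h"
    and "smooth_derivation X"
    and "\<forall>f. smooth f \<and> (\<forall>g\<in>carrier G. \<forall>v. f (\<rho> g v) = f v) \<longrightarrow> X f = (\<lambda>x. 0)"
  shows "\<forall>f. smooth f \<longrightarrow> X f = (\<lambda>x. 0)"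
proof -
  note grp = assms(1) and uni = assms(3) and hom = assms(4)
  define S where "S = \<rho> ` carrier G"
  have fin: "finite S" using assms(2) by (simp add: S_def)
  have bijr: "bij (\<rho> g)" if "g \<in> carrier G" for g using uni that by (simp add: unitary_map_def)
  have one: "\<one>\<^bsub>G\<^esub> \<in> carrier G" using grp by (simp add: group.is_monoid monoid.one_closed)
  have "\<rho> \<one>\<^bsub>G\<^esub> = \<rho> \<one>\<^bsub>G\<^esub> \<circ> \<rho> \<one>\<^bsub>G\<^esub>"
    using hom one grp by (metis group.is_monoid monoid.l_one)
  moreover have "inj (\<rho> \<one>\<^bsub>G\<^esub>)" using bijr[OF one] bij_is_inj by blast
  ultimately have r1: "\<rho> \<one>\<^bsub>G\<^esub> = id"
    by (metis comp_apply eq_id_iff injD)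
  have idS: "id \<in> S" using r1 one by (metis S_def image_eqI)
  have lin: "\<forall>s\<in>S. bounded_linear s"
    using uni unitary_bounded_linear by (auto simp: S_def)
  have bij: "\<forall>t\<in>S. bij_betw (\<lambda>s. s \<circ> t) S S"
  proof
    fix t assume "t \<in> S"
    then obtain h where h: "h \<in> carrier G" "t = \<rho> h" by (auto simp: S_def)
    have st: "surj t" using bijr[OF h(1)] h(2) bij_is_surj by blast
    have inj: "inj_on (\<lambda>s. s \<circ> t) S"
    proof (rule inj_onI)
      fix s s' assume "s \<circ> t = s' \<circ> t"
      then have "s (t z) = s' (t z)" for z by (metis comp_apply)
      then show "s = s'" using st by (metis surjD ext)
    qed
    have "(\<lambda>s. s \<circ> t) ` S \<subseteq> S"
    proof
      fix u assume "u \<in> (\<lambda>s. s \<circ> t) ` S"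
      then obtain g where g: "g \<in> carrier G" "u = \<rho> g \<circ> t" by (auto simp: S_def)
      have gh: "g \<otimes>\<^bsub>G\<^esub> h \<in> carrier G" using grp g h by (simp add: group.is_monoid monoid.m_closed)
      have "u = \<rho> (g \<otimes>\<^bsub>G\<^esub> h)" using hom g h by simp
      then show "u \<in> S" using gh by (simp add: S_def)
    qed
    moreover have "S \<subseteq> (\<lambda>s. s \<circ> t) ` S"
    proof
      fix s assume "s \<in> S"
      then obtain g where g: "g \<in> carrier G" "s = \<rho> g" by (auto simp: S_def)
      have ih: "inv\<^bsub>G\<^esub> h \<in> carrier G" using grp h by (simp add: group.inv_closed)
      have gi: "g \<otimes>\<^bsub>G\<^esub> inv\<^bsub>G\<^esub> h \<in> carrier G" using grp g ih by (simp add: group.is_monoid monoid.m_closed)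
      have "(g \<otimes>\<^bsub>G\<^esub> inv\<^bsub>G\<^esub> h) \<otimes>\<^bsub>G\<^esub> h = g"
        using grp g h ih by (simp add: group.is_monoid monoid.m_assoc group.l_inv monoid.r_one)
      then have "\<rho> (g \<otimes>\<^bsub>G\<^esub> inv\<^bsub>G\<^esub> h) \<circ> t = s"
        using hom gi h g by metis
      moreover have "\<rho> (g \<otimes>\<^bsub>G\<^esub> inv\<^bsub>G\<^esub> h) \<in> S" using gi by (simp add: S_def)
      ultimately show "s \<in> (\<lambda>s. s \<circ> t) ` S" by blast
    qed
    ultimately show "bij_betw (\<lambda>s. s \<circ> t) S S" using inj by (simp add: bij_betw_def)
  qed
  have H: "\<forall>f. smooth f \<and> (\<forall>s\<in>S. \<forall>v. f (s v) = f v) \<longrightarrow> X f = (\<lambda>x. 0)"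
    using assms(6) by (auto simp: S_def)
  show ?thesis by (rule core2[OF assms(5) fin idS lin bij H])
qed

end
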